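(* Let $K$ be a number field, $f$ a monic family homogeneous of degree $d$ and weight $e$, and let $\mathfrak{a},\mathfrak{b}$ be $M_K$-constants as in the following property: for all $v\in M_K$ and $t,z\in K$ with $\log|z|_v>\frac1e\log^+|t|_v+\mathfrak a_v$ one has $|f_t(z)|_v\ge|z|_v$ and $|G_{f_t,v}(z)-\log|z|_v|\le\mathfrak b_v$ (such constants exist, with $\mathfrak b_v=0$ at non-archimedean $v$). Then for any $v\in M_K$, any $t\in K$ with $|t|_v\leq 1$, and any two distinct $x, y\in K$, \[g_{f_t, v}(x, y)\geq -\max\{\mathfrak{a}_v, \mathfrak{b}_v\}-\log 2_v.\]
   Context: $M_K$: places of $K$, absolute values extending standard ones on $\mathbb{Q}$. An $M_K$-constant is a real function on $M_K$ vanishing at all but finitely many places. For $r>0$, $r_v=r$ if $v$ is archimedean and $r_v=1$ otherwise. $\log^+X=\log\max\{1,X\}$. Monic family homogeneous of degree $d$ and weight $e\ge 2$: $f_t(z)=\prod_{i=1}^{d/e}(z^e-\beta_i t)$ with fixed nonzero $\beta_i\in K$. $G_{g,v}(P)=\lim_{n\to\infty}d^{-n}\log^+|g^n(P)|_v$, and $g_{g,v}(x,y)=-\log|x-y|_v+G_{g,v}(x)+G_{g,v}(y)$ for $x\ne y$. *)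

theory Defs
  imports "HOL-Analysis.Analysis" "HOL-Computational_Algebra.Computational_Algebra"
begin

definition number_field_type :: "'k::field_char_0 itself \<Rightarrow> bool" where
  "number_field_type _ \<longleftrightarrow>
     (\<exists>B :: 'k set. finite B \<and> (\<forall>x::'k. \<exists>c. x = (\<Sum>b\<in>B. of_rat (c b) * b)))"

definition is_abs_val :: "('k::field \<Rightarrow> real) \<Rightarrow> bool" where
  "is_abs_val v \<longleftrightarrow> v 0 = 0 \<and> (\<forall>x. x \<noteq> 0 \<longrightarrow> v x > 0)
     \<and> (\<forall>x y. v (x * y) = v x * v y) \<and> (\<forall>x y. v (x + y) \<le> v x + v y)"

definition padic_abs :: "nat \<Rightarrow> rat \<Rightarrow> real" where
  "padic_abs p q = (if q = 0 then 0 else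
     (let (a, b) = quotient_of q in
        real p powr (real (multiplicity (int p) b) - real (multiplicity (int p) a))))"

definition archimedean_place :: "('k::field_char_0 \<Rightarrow> real) \<Rightarrow> bool" where
  "archimedean_place v \<longleftrightarrow> (\<forall>q::rat. v (of_rat q) = \<bar>real_of_rat q\<bar>)"

definition places :: "('k::field_char_0 \<Rightarrow> real) set" where
  "places = {v. is_abs_val v \<and>
     (archimedean_place v \<or> (\<exists>p. prime p \<and> (\<forall>q::rat. v (of_rat q) = padic_abs p q)))}"

definition MK_constant :: "(('k::field_char_0 \<Rightarrow> real) \<Rightarrow> real) \<Rightarrow> bool" where
  "MK_constant c \<longleftrightarrow> finite {v \<in> (places :: ('k \<Rightarrow> real) set). c v \<noteq> 0}"

text \<open>r_v = r at archimedean places, 1 otherwise.\<close>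
definition at_place :: "real \<Rightarrow> ('k::field_char_0 \<Rightarrow> real) \<Rightarrow> real" where
  "at_place r v = (if archimedean_place v then r else 1)"

definition logplus :: "real \<Rightarrow> real" where
  "logplus x = ln (max 1 x)"

definition monic_family :: "nat \<Rightarrow> nat \<Rightarrow> (nat \<Rightarrow> 'k::field) \<Rightarrow> 'k \<Rightarrow> 'k \<Rightarrow> 'k" where
  "monic_family d e \<beta> t z = (\<Prod>i\<in>{1..d div e}. (z ^ e - \<beta> i * t))"

definition G_esc :: "nat \<Rightarrow> ('k \<Rightarrow> 'k) \<Rightarrow> ('k \<Rightarrow> real) \<Rightarrow> 'k \<Rightarrow> real" where
  "G_esc d g v P = lim (\<lambda>n. logplus (v ((g ^^ n) P)) / real d ^ n)"

definition g_green :: "nat \<Rightarrow> ('k::field \<Rightarrow> 'k) \<Rightarrow> ('k \<Rightarrow> real) \<Rightarrow> 'k \<Rightarrow> 'k \<Rightarrow> real" where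
  "g_green d g v x y = - ln (v (x - y)) + G_esc d g v x + G_esc d g v y"

end

theory Submission
  imports Defs
begin
lemma av_nonneg: "is_abs_val v \<Longrightarrow> v x \<ge> 0"
  unfolding is_abs_val_def by (cases "x = 0") (auto simp: less_imp_le)
lemma av_pos: "is_abs_val v \<Longrightarrow> x \<noteq> 0 \<Longrightarrow> v x > 0"
  unfolding is_abs_val_def by auto
lemma av_zero: "is_abs_val v \<Longrightarrow> v 0 = 0"
  unfolding is_abs_val_def by auto
lemma av_mult: "is_abs_val v \<Longrightarrow> v (x * y) = v x * v y"
  unfolding is_abs_val_def by auto
lemma av_tri: "is_abs_val v \<Longrightarrow> v (x + y) \<le> v x + v y"
  unfolding is_abs_val_def by auto
lemma av_one: "is_abs_val v \<Longrightarrow> v (1::'k::field) = 1"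
proof -
  assume a: "is_abs_val v"
  have "v (1::'k) = v 1 * v 1" using av_mult[OF a, of 1 1] by simp
  moreover have "v (1::'k) > 0" using av_pos[OF a] by simp
  ultimately show ?thesis by (metis mult_cancel_right1 less_irrefl)
qed
lemma av_uminus: "is_abs_val v \<Longrightarrow> v (- (x::'k::field)) = v x"
proof -
  assume a: "is_abs_val v"
  have "v (-1::'k) * v (-1) = 1" using av_mult[OF a, of "-1::'k" "-1"] av_one[OF a] by simp
  moreover have "v (-1::'k) > 0" using av_pos[OF a] by simp
  ultimately have "v (-1::'k) = 1"
    by (metis (no_types, opaque_lifting) abs_of_pos mult_cancel_right1 real_sqrt_abs2 real_sqrt_one power2_eq_square)
  then show ?thesis using av_mult[OF a, of "-1" x] by simp
qed
lemma av_diff_sym: "is_abs_val v \<Longrightarrow> v ((x::'k::field) - y) = v (y - x)"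
  by (metis av_uminus minus_diff_eq)
lemma av_power: "is_abs_val v \<Longrightarrow> v ((x::'k::field) ^ n) = v x ^ n"
  by (induction n) (auto simp: av_one av_mult)
lemma av_prod: "is_abs_val v \<Longrightarrow> v (\<Prod>i\<in>A. (g i::'k::field)) = (\<Prod>i\<in>A. v (g i))"
  by (induction A rule: infinite_finite_induct) (auto simp: av_one av_mult)
lemma av_sum: "is_abs_val v \<Longrightarrow> v (\<Sum>i\<in>A. (g i::'k::field)) \<le> (\<Sum>i\<in>A. v (g i))"
proof (induction A rule: infinite_finite_induct)
  case (insert x F)
  then show ?case using av_tri[OF insert.prems, of "g x" "sum g F"] by simp
qed (auto simp: av_zero)
lemma av_diff_ge: "is_abs_val v \<Longrightarrow> v ((x::'k::field) - y) \<ge> v x - v y"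
  using av_tri[of v "x - y" y] by simp
lemma av_diff_le: "is_abs_val v \<Longrightarrow> v ((x::'k::field) - y) \<le> v x + v y"
  using av_tri[of v x "-y"] av_uminus[of v y] by simp



lemma av_ultra:
  fixes x y :: "'k::field"
  assumes a: "is_abs_val v" and nat1: "\<forall>n::nat. v (of_nat n :: 'k) \<le> 1"
  shows "v (x + y) \<le> max (v x) (v y)"
proof -
  define M where "M = max (v x) (v y)"
  have vx: "v x \<le> M" and vy: "v y \<le> M" unfolding M_def by auto
  have M0: "M \<ge> 0" using av_nonneg[OF a, of x] vx by linarith
  show ?thesis
  proof (cases "M = 0")
    case True
    then have "v x = 0" "v y = 0" using vx vy av_nonneg[OF a] by (meson antisym)+
    then have "x = 0" "y = 0" using av_pos[OF a] by (metis less_irrefl)+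
    then show ?thesis using av_zero[OF a] by simp
  next
    case False
    then have Mp: "M > 0" using M0 by simp
    define r where "r = v (x + y) / M"
    have r0: "r \<ge> 0" unfolding r_def using av_nonneg[OF a] Mp by simp
    have bound: "r ^ n \<le> 2 * real n" if n1: "n \<ge> 1" for n
    proof -
      have "v (x + y) ^ n = v ((x + y) ^ n)" using av_power[OF a] by simp
      also have "\<dots> = v (\<Sum>k\<le>n. of_nat (n choose k) * x ^ k * y ^ (n - k))"
        by (simp add: binomial_ring)
      also have "\<dots> \<le> (\<Sum>k\<le>n. v (of_nat (n choose k) * x ^ k * y ^ (n - k)))"
        by (rule av_sum[OF a])
      also have "\<dots> \<le> (\<Sum>k\<le>n. M ^ n)"
      proof (rule sum_mono)
        fix k assume k: "k \<in> {..n}"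
        have "v (of_nat (n choose k) * x ^ k * y ^ (n - k))
              = v (of_nat (n choose k)) * v x ^ k * v y ^ (n - k)"
          by (simp add: av_mult[OF a] av_power[OF a])
        also have "\<dots> \<le> 1 * M ^ k * M ^ (n - k)"
          apply (intro mult_mono power_mono)
          using nat1 vx vy av_nonneg[OF a] M0 by auto
        also have "\<dots> = M ^ n" using k by (simp add: power_add[symmetric])
        finally show "v (of_nat (n choose k) * x ^ k * y ^ (n - k)) \<le> M ^ n" .
      qed
      also have "\<dots> = (real n + 1) * M ^ n" by simp
      finally have "v (x + y) ^ n \<le> (real n + 1) * M ^ n" .
      then have "r ^ n \<le> real n + 1"
        unfolding r_def using Mp by (simp add: power_divide divide_le_eq)
      then show ?thesis using n1 by simp
    qed
    have lim: "(\<lambda>n. root n 2 * root n (real n)) \<longlonglongrightarrow> 1 * 1"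
      by (intro tendsto_mult LIMSEQ_root_const LIMSEQ_root) auto
    have "r \<le> 1"
    proof (rule LIMSEQ_le_const[OF lim[simplified]], intro exI allI impI)
      fix n :: nat assume "n \<ge> 1"
      then have np: "n > 0" by simp
      have "r = root n (r ^ n)" using real_root_power_cancel[OF np r0] by simp
      also have "\<dots> \<le> root n (2 * real n)" using bound[OF \<open>n \<ge> 1\<close>] np by simp
      also have "\<dots> = root n 2 * root n (real n)" by (simp add: real_root_mult)
      finally show "r \<le> root n 2 * root n (real n)" .
    qed
    then show ?thesis unfolding r_def M_def[symmetric] using Mp by (simp add: divide_le_eq)
  qed
qed

lemma padic_nat_le1:
  assumes p: "prime (p::nat)"
  shows "padic_abs p (of_nat n) \<le> 1"
proof (cases "n = 0")
  case False
  have q: "quotient_of (of_nat n :: rat) = (int n, 1)"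
    using quotient_of_int[of "int n"] by simp
  have "padic_abs p (of_nat n) = real p powr (- real (multiplicity (int p) (int n)))"
    using False unfolding padic_abs_def q by simp
  also have "\<dots> \<le> 1"
  proof -
    have "1 \<le> real p powr real (multiplicity (int p) (int n))"
      by (rule ge_one_powr_ge_zero) (use prime_gt_1_nat[OF p] in auto)
    then show ?thesis by (simp add: powr_minus inverse_le_1_iff)
  qed
  finally show ?thesis .
qed (simp add: padic_abs_def)

lemma place_diff_le:
  fixes x y :: "'k::field_char_0"
  assumes v: "v \<in> places"
  shows "v (x - y) \<le> at_place 2 v * max (v x) (v y)"
proof -
  have a: "is_abs_val v" using v unfolding places_def by auto
  show ?thesis
  proof (cases "archimedean_place v")
    case True
    then show ?thesis using av_diff_le[OF a, of x y] unfolding at_place_def by simp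
  next
    case False
    then obtain p where p: "prime p" and pv: "\<forall>q::rat. v (of_rat q) = padic_abs p q"
      using v unfolding places_def by auto
    have "\<forall>n::nat. v (of_nat n :: 'k) \<le> 1"
    proof
      fix n :: nat
      have "v (of_nat n :: 'k) = padic_abs p (of_nat n)"
        using pv[rule_format, of "of_nat n"] by simp
      then show "v (of_nat n :: 'k) \<le> 1" using pv padic_nat_le1[OF p] by simp
    qed
    then have "v (x + - y) \<le> max (v x) (v (- y))" using av_ultra[OF a] by blast
    then show ?thesis using False av_uminus[OF a, of y] unfolding at_place_def by simp
  qed
qed


lemma G_conv:
  fixes v :: "'k::field \<Rightarrow> real" and f :: "'k \<Rightarrow> 'k"
  assumes a: "is_abs_val v" and d: "d \<ge> 2" and R: "R \<ge> 1" and K: "K \<ge> 1"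
    and bnd: "\<And>z. v z \<ge> R \<Longrightarrow> v z ^ d / K \<le> v (f z) \<and> v (f z) \<le> K * v z ^ d"
    and esc: "\<And>z. v z \<ge> R \<Longrightarrow> v (f z) \<ge> R"
  shows "convergent (\<lambda>n. logplus (v ((f ^^ n) P)) / real d ^ n)"
proof (cases "\<forall>n. v ((f ^^ n) P) < R")
  case True
  have "(\<lambda>n. logplus (v ((f ^^ n) P)) / real d ^ n) \<longlonglongrightarrow> 0"
  proof (rule tendsto_sandwich[of "\<lambda>n. 0" _ _ "\<lambda>n. ln R / real d ^ n"])
    show "\<forall>\<^sub>F n in sequentially. 0 \<le> logplus (v ((f ^^ n) P)) / real d ^ n"
      by (simp add: logplus_def)
    show "\<forall>\<^sub>F n in sequentially. logplus (v ((f ^^ n) P)) / real d ^ n \<le> ln R / real d ^ n"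
    proof (rule always_eventually, rule allI)
      fix n
      have "logplus (v ((f ^^ n) P)) \<le> ln R"
        unfolding logplus_def using True R by (auto intro!: ln_le_cancel_iff[THEN iffD2] less_imp_le)
      then show "logplus (v ((f ^^ n) P)) / real d ^ n \<le> ln R / real d ^ n"
        by (simp add: divide_right_mono)
    qed
    show "(\<lambda>n. ln R / real d ^ n) \<longlonglongrightarrow> 0" using d by (intro LIMSEQ_divide_realpow_zero) auto
  qed simp
  then show ?thesis by (rule convergentI)
next
  case False
  then obtain N where N: "v ((f ^^ N) P) \<ge> R" by (auto simp: not_less)
  define z where "z n = (f ^^ (N + n)) P" for n
  have zS: "z (Suc n) = f (z n)" for n unfolding z_def by simp
  have zR: "v (z n) \<ge> R" for n
    by (induction n) (use N esc in \<open>auto simp: z_def zS\<close>)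
  have zpos: "v (z n) > 0" for n using zR[of n] R by simp
  define u where "u n = ln (v (z n)) / real d ^ (N + n)" for n
  have dpos: "real d > 0" using d by simp
  define w where "w k = u (Suc k) - u k" for k
  have wb: "\<bar>w k\<bar> \<le> ln K * (1 / real d) ^ (N + Suc k)" for k
  proof -
    have b1: "v (z k) ^ d / K \<le> v (z (Suc k))" and b2: "v (z (Suc k)) \<le> K * v (z k) ^ d"
      using bnd[OF zR[of k]] zS by auto
    have Kp: "K > 0" using K by simp
    have l1: "real d * ln (v (z k)) - ln K \<le> ln (v (z (Suc k)))"
    proof -
      have "ln (v (z k) ^ d / K) \<le> ln (v (z (Suc k)))"
        using b1 zpos Kp by (subst ln_le_cancel_iff) auto
      then show ?thesis using zpos[of k] Kp by (simp add: ln_div ln_realpow less_imp_neq[symmetric])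
    qed
    have l2: "ln (v (z (Suc k))) \<le> ln K + real d * ln (v (z k))"
    proof -
      have "ln (v (z (Suc k))) \<le> ln (K * v (z k) ^ d)"
        using b2 zpos Kp by (subst ln_le_cancel_iff) auto
      then show ?thesis using zpos[of k] Kp by (simp add: ln_mult ln_realpow less_imp_neq[symmetric])
    qed
    have "w k = (ln (v (z (Suc k))) - real d * ln (v (z k))) / real d ^ (N + Suc k)"
      unfolding w_def u_def using dpos by (simp add: field_simps)
    then have "\<bar>w k\<bar> = \<bar>ln (v (z (Suc k))) - real d * ln (v (z k))\<bar> / real d ^ (N + Suc k)"
      using dpos by simp
    also have "\<dots> \<le> ln K / real d ^ (N + Suc k)"
      using l1 l2 dpos by (intro divide_right_mono) auto
    also have "\<dots> = ln K * (1 / real d) ^ (N + Suc k)" by (simp add: power_one_over)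
    finally show ?thesis .
  qed
  have eqs: "(\<lambda>k. ln K * (1 / real d) ^ (N + Suc k)) = (\<lambda>k. (ln K * (1 / real d) ^ (Suc N)) * (1 / real d) ^ k)"
    by (rule ext) (metis add_Suc_shift add_Suc_right mult.assoc power_add)
  have "summable (\<lambda>k. ln K * (1 / real d) ^ (N + Suc k))"
    unfolding eqs using d by (intro summable_mult summable_geometric) auto
  then have "summable w"
    by (rule summable_comparison_test[rotated]) (intro exI[of _ 0] allI impI, simp only: real_norm_def wb)
  then have "convergent (\<lambda>n. \<Sum>k<n. w k)" by (simp add: summable_iff_convergent)
  then have "convergent (\<lambda>n. u 0 + (\<Sum>k<n. w k))" by (intro convergent_add convergent_const)
  moreover have "u 0 + (\<Sum>k<n. w k) = u n" for n
    unfolding w_def by (simp add: sum_lessThan_telescope)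
  ultimately have cu: "convergent u" by simp
  then obtain L where L: "u \<longlonglongrightarrow> L" by (auto simp: convergent_def)
  have equ: "(\<lambda>n. logplus (v ((f ^^ (n + N)) P)) / real d ^ (n + N)) = u"
  proof
    fix n
    have "logplus (v (z n)) = ln (v (z n))"
      using zR[of n] R unfolding logplus_def by (simp add: max_absorb2)
    then show "logplus (v ((f ^^ (n + N)) P)) / real d ^ (n + N) = u n"
      unfolding u_def z_def add.commute[of n N] by simp
  qed
  have "(\<lambda>n. logplus (v ((f ^^ n) P)) / real d ^ n) \<longlonglongrightarrow> L"
    by (rule LIMSEQ_offset[where k = N]) (use equ L in simp)
  then show ?thesis by (rule convergentI)
qed

lemma monic_bounds:
  fixes \<beta> :: "nat \<Rightarrow> 'k::field" and t :: 'k
  assumes a: "is_abs_val v" and e2: "e \<ge> 2" and edvd: "e dvd d" and dpos: "d > 0"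
  obtains R K where "R \<ge> 1" "K \<ge> 1"
    "\<And>z. v z \<ge> R \<Longrightarrow> v z ^ d / K \<le> v (monic_family d e \<beta> t z) \<and> v (monic_family d e \<beta> t z) \<le> K * v z ^ d"
    "\<And>z. v z \<ge> R \<Longrightarrow> v (monic_family d e \<beta> t z) \<ge> R"
proof -
  define m where "m = d div e"
  have dm: "d = e * m" unfolding m_def using edvd by simp
  have d2: "d \<ge> 2"
  proof -
    have "e \<le> d" using edvd dpos by (simp add: dvd_imp_le)
    then show ?thesis using e2 by simp
  qed
  define B where "B = (\<Sum>i\<in>{1..m}. v (\<beta> i * t))"
  define K :: real where "K = 2 ^ m"
  define R where "R = max 1 (max (2 * B) K)"
  have R1: "R \<ge> 1" and RB: "R \<ge> 2 * B" and RK: "R \<ge> K" unfolding R_def by auto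
  have K1: "K \<ge> 1" unfolding K_def by simp
  have vbB: "v (\<beta> i * t) \<le> B" if "i \<in> {1..m}" for i
    unfolding B_def using that av_nonneg[OF a]
    by (intro member_le_sum) auto
  have main: "v z ^ d / K \<le> v (monic_family d e \<beta> t z) \<and> v (monic_family d e \<beta> t z) \<le> K * v z ^ d"
    if zR: "v z \<ge> R" for z
  proof -
    define Z where "Z = v z ^ e"
    have vz1: "v z \<ge> 1" using zR R1 by simp
    have vzZ: "v z \<le> Z" unfolding Z_def using vz1 e2 by (intro self_le_power) auto
    have Zv: "v (z ^ e) = Z" unfolding Z_def by (simp add: av_power[OF a])
    have fac: "Z / 2 \<le> v (z ^ e - \<beta> i * t) \<and> v (z ^ e - \<beta> i * t) \<le> 2 * Z" if i: "i \<in> {1..m}" for i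
    proof -
      have w: "v (\<beta> i * t) \<le> Z / 2" using vbB[OF i] RB zR vzZ by simp
      have "v (z ^ e - \<beta> i * t) \<ge> Z - v (\<beta> i * t)" using av_diff_ge[OF a] Zv by metis
      moreover have "v (z ^ e - \<beta> i * t) \<le> Z + v (\<beta> i * t)" using av_diff_le[OF a] Zv by metis
      moreover have "Z \<ge> 0" using vzZ vz1 by simp
      ultimately show ?thesis using w av_nonneg[OF a, of "\<beta> i * t"] by linarith
    qed
    have fz: "v (monic_family d e \<beta> t z) = (\<Prod>i\<in>{1..m}. v (z ^ e - \<beta> i * t))"
      unfolding monic_family_def m_def[symmetric] by (rule av_prod[OF a])
    have Z0: "Z \<ge> 0" using vzZ vz1 by simp
    have lo: "(\<Prod>i\<in>{1..m}. Z / 2) \<le> v (monic_family d e \<beta> t z)"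
      unfolding fz by (rule prod_mono) (use fac Z0 in auto)
    have hi: "v (monic_family d e \<beta> t z) \<le> (\<Prod>i\<in>{1..m}. 2 * Z)"
      unfolding fz by (rule prod_mono) (use fac av_nonneg[OF a] in auto)
    have pw: "Z ^ m = v z ^ d" unfolding Z_def dm by (simp add: power_mult)
    have "(\<Prod>i\<in>{1..m}. Z / 2) = v z ^ d / K" unfolding K_def using pw by (simp add: power_divide)
    moreover have "(\<Prod>i\<in>{1..m}. 2 * Z) = K * v z ^ d" unfolding K_def using pw by (simp add: power_mult_distrib)
    ultimately show ?thesis using lo hi by simp
  qed
  have escape: "v (monic_family d e \<beta> t z) \<ge> R" if zR: "v z \<ge> R" for z
  proof -
    have vz1: "v z \<ge> 1" using zR R1 by simp
    have "v z ^ 2 \<le> v z ^ d" using vz1 d2 by (intro power_increasing) auto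
    moreover have "R * K \<le> v z ^ 2" unfolding power2_eq_square
      using zR RK K1 R1 by (intro mult_mono) auto
    ultimately have "R * K \<le> v z ^ d" by linarith
    then have "R \<le> v z ^ d / K" using K1 by (simp add: le_divide_eq)
    then show ?thesis using main[OF zR] by linarith
  qed
  show ?thesis using that[OF R1 K1 main escape] by blast
qed

lemma G_nonneg:
  fixes \<beta> :: "nat \<Rightarrow> 'k::field" and t :: 'k
  assumes a: "is_abs_val v" and e2: "e \<ge> 2" and edvd: "e dvd d" and dpos: "d > 0"
  shows "G_esc d (monic_family d e \<beta> t) v y \<ge> 0"
proof -
  have d2: "d \<ge> 2"
  proof -
    have "e \<le> d" using edvd dpos by (simp add: dvd_imp_le)
    then show ?thesis using e2 by simp
  qed
  obtain R K where RK: "R \<ge> 1" "K \<ge> 1"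
    "\<And>z. v z \<ge> R \<Longrightarrow> v z ^ d / K \<le> v (monic_family d e \<beta> t z) \<and> v (monic_family d e \<beta> t z) \<le> K * v z ^ d"
    "\<And>z. v z \<ge> R \<Longrightarrow> v (monic_family d e \<beta> t z) \<ge> R"
    using monic_bounds[OF a e2 edvd dpos] by blast
  have c: "convergent (\<lambda>n. logplus (v ((monic_family d e \<beta> t ^^ n) y)) / real d ^ n)"
    by (rule G_conv[OF a d2 RK])
  then have L: "(\<lambda>n. logplus (v ((monic_family d e \<beta> t ^^ n) y)) / real d ^ n)
      \<longlonglongrightarrow> G_esc d (monic_family d e \<beta> t) v y"
    unfolding G_esc_def by (simp add: convergent_LIMSEQ_iff)
  show ?thesis
    by (rule LIMSEQ_le_const[OF L]) (auto simp: logplus_def)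
qed

theorem lemma2p2:
  fixes d e :: nat and \<beta> :: "nat \<Rightarrow> 'k::field_char_0"
    and a b :: "('k \<Rightarrow> real) \<Rightarrow> real"
  assumes K: "number_field_type TYPE('k)"
    and e2: "e \<ge> 2" and edvd: "e dvd d" and dpos: "d > 0"
    and \<beta>nz: "\<forall>i\<in>{1..d div e}. \<beta> i \<noteq> 0"
    and a_const: "MK_constant a" and b_const: "MK_constant b"
    and ab_prop: "\<forall>v\<in>places. \<forall>t z :: 'k. z \<noteq> 0 \<longrightarrow>
        ln (v z) > logplus (v t) / real e + a v \<longrightarrow>
          v (monic_family d e \<beta> t z) \<ge> v z \<and>
          \<bar>G_esc d (monic_family d e \<beta> t) v z - ln (v z)\<bar> \<le> b v"
    and v: "v \<in> places" and t: "v t \<le> 1" and xy: "x \<noteq> y"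
  shows "g_green d (monic_family d e \<beta> t) v x y \<ge> - max (a v) (b v) - ln (at_place 2 v)"
proof -
  have av: "is_abs_val v" using v unfolding places_def by auto
  let ?f = "monic_family d e \<beta> t"
  have G0: "G_esc d ?f v w \<ge> 0" for w by (rule G_nonneg[OF av e2 edvd dpos])
  have lt: "logplus (v t) = 0" unfolding logplus_def using t by (simp add: max_absorb1)
  have A2: "at_place 2 v > (0::real)" unfolding at_place_def by simp
  have claim: "g_green d ?f v x' y' \<ge> - max (a v) (b v) - ln (at_place 2 v)"
    if ne: "x' \<noteq> y'" and le: "v y' \<le> v x'" for x' y'
  proof -
    have x0: "x' \<noteq> 0"
    proof
      assume "x' = 0"
      then have "v y' \<le> 0" using le av_zero[OF av] by simp
      then have "y' = 0" using av_pos[OF av, of y'] by force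
      then show False using ne \<open>x' = 0\<close> by simp
    qed
    have vx: "v x' > 0" using av_pos[OF av x0] .
    have vd: "v (x' - y') > 0" using av_pos[OF av] ne by simp
    have "v (x' - y') \<le> at_place 2 v * max (v x') (v y')" by (rule place_diff_le[OF v])
    then have "v (x' - y') \<le> at_place 2 v * v x'" using le by (simp add: max_absorb1)
    then have "ln (v (x' - y')) \<le> ln (at_place 2 v * v x')"
      using vd A2 vx by (subst ln_le_cancel_iff) auto
    then have lnd: "ln (v (x' - y')) \<le> ln (at_place 2 v) + ln (v x')"
      using A2 vx by (simp add: ln_mult)
    have gdef: "g_green d ?f v x' y' = - ln (v (x' - y')) + G_esc d ?f v x' + G_esc d ?f v y'"
      unfolding g_green_def by simp
    show ?thesis
    proof (cases "ln (v x') > a v")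
      case True
      then have "\<bar>G_esc d ?f v x' - ln (v x')\<bar> \<le> b v"
        using ab_prop v x0 lt by auto
      then show ?thesis using gdef lnd G0[of y'] by linarith
    next
      case False
      then show ?thesis using gdef lnd G0[of y'] G0[of x'] by linarith
    qed
  qed
  show ?thesis
  proof (cases "v y \<le> v x")
    case True
    then show ?thesis using claim xy by blast
  next
    case False
    then have "g_green d ?f v y x \<ge> - max (a v) (b v) - ln (at_place 2 v)"
      using claim xy by auto
    moreover have "g_green d ?f v y x = g_green d ?f v x y"
      unfolding g_green_def using av_diff_sym[OF av, of x y] by simp
    ultimately show ?thesis by simp
  qed
qed

end
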